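(* Let $P$ be a finite partially ordered set having an infimum operation $\wedge$ and a greatest element $\top$, put $P^\times=P\setminus\{\top\}$, and let $U\colon P\to\mathbf{Ab}$ be a presheaf admitting an extender $\lambda$. Then the homomorphism $U(\top)\to\lim_{p\in P^\times}U(p)$, $u\mapsto(u|_p)_{p\in P^\times}$, is surjective.
   Context: A presheaf $U\colon P\to\mathbf{Ab}$ is a contravariant functor: abelian groups $U(p)$ and restriction homomorphisms $u\mapsto u|_q\colon U(p)\to U(q)$ for $p\ge q$, functorial. $\lim_{p\in P^\times}U(p)$ is the group of families $(u_p)_{p\in P^\times}$, $u_p\in U(p)$, with $u_p|_q=u_q$ whenever $p\ge q$. An extender for $U$ is a collection of homomorphisms $\lambda^q_p\colon U(q)\to U(p)$, for $p,q\in P$ with $p\ge q$, such that for all $p,q\in P$ and $x\in U(q)$: $\lambda^q_p(x)|_q=x$ whenever $p\ge q$, and $\lambda^q_\top(x)|_p=\lambda^{p\wedge q}_p(x|_{p\wedge q})$. *)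

theory Defs
  imports "HOL-Algebra.Group"
begin

definition ab_presheaf ::
  "('p::order \<Rightarrow> ('a,'b) monoid_scheme) \<Rightarrow> ('p \<Rightarrow> 'p \<Rightarrow> 'a \<Rightarrow> 'a) \<Rightarrow> bool" where
  "ab_presheaf U res \<longleftrightarrow>
     (\<forall>p. comm_group (U p)) \<and>
     (\<forall>p q. q \<le> p \<longrightarrow> res p q \<in> hom (U p) (U q)) \<and>
     (\<forall>p. \<forall>x\<in>carrier (U p). res p p x = x) \<and>
     (\<forall>p q s. s \<le> q \<longrightarrow> q \<le> p \<longrightarrow>
        (\<forall>x\<in>carrier (U p). res q s (res p q x) = res p s x))"

text \<open>Extender: lam q p is the homomorphism lambda^q_p : U q \<rightarrow> U p for q \<le> p.\<close>
definition is_extender ::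
  "('p::{semilattice_inf, order_top} \<Rightarrow> ('a,'b) monoid_scheme) \<Rightarrow> ('p \<Rightarrow> 'p \<Rightarrow> 'a \<Rightarrow> 'a)
     \<Rightarrow> ('p \<Rightarrow> 'p \<Rightarrow> 'a \<Rightarrow> 'a) \<Rightarrow> bool" where
  "is_extender U res lam \<longleftrightarrow>
     (\<forall>p q. q \<le> p \<longrightarrow> lam q p \<in> hom (U q) (U p)) \<and>
     (\<forall>p q. \<forall>x\<in>carrier (U q).
        (q \<le> p \<longrightarrow> res p q (lam q p x) = x) \<and>
        res Orderings.top p (lam q Orderings.top x) = lam (Lattices.inf p q) p (res q (Lattices.inf p q) x))"

text \<open>Elements of the limit over P minus top: compatible families (values at top are irrelevant).\<close>
definition lim_family ::
  "('p::order_top \<Rightarrow> ('a,'b) monoid_scheme) \<Rightarrow> ('p \<Rightarrow> 'p \<Rightarrow> 'a \<Rightarrow> 'a) \<Rightarrow> ('p \<Rightarrow> 'a) \<Rightarrow> bool" where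
  "lim_family U res u \<longleftrightarrow>
     (\<forall>p. p \<noteq> Orderings.top \<longrightarrow> u p \<in> carrier (U p)) \<and>
     (\<forall>p q. p \<noteq> Orderings.top \<longrightarrow> q \<noteq> Orderings.top \<longrightarrow> q \<le> p \<longrightarrow> res p q (u p) = u q)"

end

theory Submission
  imports Defs
begin

lemma step_lemma:
  fixes U :: "'p::{finite, semilattice_inf, order_top} \<Rightarrow> ('a,'b) monoid_scheme"
    and res :: "'p \<Rightarrow> 'p \<Rightarrow> 'a \<Rightarrow> 'a"
    and lam :: "'p \<Rightarrow> 'p \<Rightarrow> 'a \<Rightarrow> 'a"
  assumes A: "ab_presheaf U res"
    and E: "is_extender U res lam"
    and L: "lim_family U res u"
  shows "(\<forall>p\<in>D. p \<noteq> Orderings.top) \<longrightarrow> (\<forall>p\<in>D. \<forall>r. r \<le> p \<longrightarrow> r \<in> D) \<longrightarrow>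
     (\<exists>x\<in>carrier (U Orderings.top). \<forall>p\<in>D. res Orderings.top p x = u p)"
proof -
  have fin: "finite D" by simp
  then show ?thesis
  proof (induction D rule: finite_psubset_induct)
    case (psubset D)
    show ?case
    proof (intro impI)
      assume nt: "\<forall>p\<in>D. p \<noteq> Orderings.top" and dc: "\<forall>p\<in>D. \<forall>r. r \<le> p \<longrightarrow> r \<in> D"
      show "\<exists>x\<in>carrier (U Orderings.top). \<forall>p\<in>D. res Orderings.top p x = u p"
      proof (cases "D = {}")
        case True
        have "comm_group (U Orderings.top)" using A unfolding ab_presheaf_def by (elim conjE) blast
        then have "\<one>\<^bsub>U Orderings.top\<^esub> \<in> carrier (U Orderings.top)" by (simp add: comm_group.axioms(2) group.is_monoid monoid.one_closed)
        then show ?thesis using True by blast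
      next
        case False
        obtain q where qD: "q \<in> D" and qmax: "\<forall>b\<in>D. q \<le> b \<longrightarrow> q = b"
          using finite_has_maximal[OF psubset.hyps False] by blast
        let ?D = "D - {q}"
        have sub: "?D \<subset> D" using qD by blast
        have dc': "\<forall>p\<in>?D. \<forall>r. r \<le> p \<longrightarrow> r \<in> ?D"
          proof (intro ballI allI impI)
          fix p r assume pD: "p \<in> ?D" and rp: "r \<le> p"
          have "r \<in> D" using dc pD rp by blast
          moreover have "r \<noteq> q"
          proof
            assume "r = q"
            then have "q = p" using qmax pD rp by blast
            then show False using pD by blast
          qed
          ultimately show "r \<in> ?D" by blast
        qed
        obtain x where xc: "x \<in> carrier (U Orderings.top)" and xD: "\<forall>p\<in>?D. res Orderings.top p x = u p"
          using psubset.IH[OF sub] nt dc' by blast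
        have grp: "\<And>p. comm_group (U p)" using A unfolding ab_presheaf_def by (elim conjE) blast
        have G: "\<And>p. group (U p)" using grp comm_group.axioms(2) by blast
        have reshom: "\<And>p q. q \<le> p \<Longrightarrow> res p q \<in> hom (U p) (U q)"
          using A unfolding ab_presheaf_def by (elim conjE) blast
        have resid: "\<And>p y. y \<in> carrier (U p) \<Longrightarrow> res p p y = y"
          using A unfolding ab_presheaf_def by (elim conjE) blast
        have rescomp: "\<And>p q s y. s \<le> q \<Longrightarrow> q \<le> p \<Longrightarrow> y \<in> carrier (U p) \<Longrightarrow> res q s (res p q y) = res p s y"
          using A unfolding ab_presheaf_def by (elim conjE) blast
        have lamhom: "\<And>p q. q \<le> p \<Longrightarrow> lam q p \<in> hom (U q) (U p)"
          using E unfolding is_extender_def by (elim conjE) blast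
        have lamres: "\<And>p q y. y \<in> carrier (U q) \<Longrightarrow> q \<le> p \<Longrightarrow> res p q (lam q p y) = y"
          using E unfolding is_extender_def by (elim conjE) blast
        have lamtop: "\<And>p q y. y \<in> carrier (U q) \<Longrightarrow> res Orderings.top p (lam q Orderings.top y) = lam (inf p q) p (res q (inf p q) y)"
          using E unfolding is_extender_def by (elim conjE) blast
        have uc: "\<And>p. p \<noteq> Orderings.top \<Longrightarrow> u p \<in> carrier (U p)" using L unfolding lim_family_def by (elim conjE) blast
        have ures: "\<And>p q. p \<noteq> Orderings.top \<Longrightarrow> q \<noteq> Orderings.top \<Longrightarrow> q \<le> p \<Longrightarrow> res p q (u p) = u q"
          using L unfolding lim_family_def by (elim conjE) blast
        have qnt: "q \<noteq> Orderings.top" using nt qD by blast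
        have rxq: "res Orderings.top q x \<in> carrier (U q)" using hom_in_carrier[OF reshom[OF top_greatest] xc] .
        define d where "d = u q \<otimes>\<^bsub>U q\<^esub> inv\<^bsub>U q\<^esub> (res Orderings.top q x)"
        have dc0: "d \<in> carrier (U q)" unfolding d_def using uc[OF qnt] rxq G
          by (simp add: group.inv_closed monoid.m_closed group.is_monoid)
        have lqt: "lam q Orderings.top d \<in> carrier (U Orderings.top)" using hom_in_carrier[OF lamhom[OF top_greatest] dc0] .
        define x' where "x' = x \<otimes>\<^bsub>U Orderings.top\<^esub> lam q Orderings.top d"
        have x'c: "x' \<in> carrier (U Orderings.top)" unfolding x'_def using xc lqt G
          by (simp add: monoid.m_closed group.is_monoid)
        have rx': "\<And>p. res Orderings.top p x' = res Orderings.top p x \<otimes>\<^bsub>U p\<^esub> res Orderings.top p (lam q Orderings.top d)"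
          unfolding x'_def using hom_mult[OF reshom[OF top_greatest] xc lqt] .
        have "\<forall>p\<in>D. res Orderings.top p x' = u p"
        proof
          fix p assume pD: "p \<in> D"
          show "res Orderings.top p x' = u p"
          proof (cases "p = q")
            case True
            have lqq: "lam q q d \<in> carrier (U q)" using hom_in_carrier[OF lamhom[OF order_refl] dc0] .
            have "lam q q d = d" using lamres[OF dc0, of q] resid[OF lqq] by simp
            then have "res Orderings.top q (lam q Orderings.top d) = d" using lamtop[OF dc0, of q] resid[OF dc0] by simp
            then have "res Orderings.top q x' = res Orderings.top q x \<otimes>\<^bsub>U q\<^esub> (u q \<otimes>\<^bsub>U q\<^esub> inv\<^bsub>U q\<^esub> (res Orderings.top q x))"
              using rx' d_def by simp
            also have "\<dots> = u q" proof -
              have ic: "inv\<^bsub>U q\<^esub> (res Orderings.top q x) \<in> carrier (U q)" using group.inv_closed[OF G rxq] .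
              have "res Orderings.top q x \<otimes>\<^bsub>U q\<^esub> (u q \<otimes>\<^bsub>U q\<^esub> inv\<^bsub>U q\<^esub> (res Orderings.top q x))
                 = u q \<otimes>\<^bsub>U q\<^esub> (res Orderings.top q x \<otimes>\<^bsub>U q\<^esub> inv\<^bsub>U q\<^esub> (res Orderings.top q x))"
                using comm_monoid.m_lcomm[OF comm_group.axioms(1)[OF grp] rxq uc[OF qnt] ic] .
              also have "\<dots> = u q \<otimes>\<^bsub>U q\<^esub> \<one>\<^bsub>U q\<^esub>" using group.r_inv[OF G rxq] by simp
              also have "\<dots> = u q" using monoid.r_one[OF group.is_monoid[OF G] uc[OF qnt]] .
              finally show ?thesis .
            qed
            finally show ?thesis using True by simp
          next
            case False
            let ?r = "inf p q"
            have rq: "?r \<le> q" by simp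
            have rne: "?r \<noteq> q" proof
              assume "?r = q"
              then have "q \<le> p" by (metis inf.cobounded1)
              then show False using qmax pD False by blast
            qed
            have rD: "?r \<in> ?D" using dc pD rne by simp
            have rnt: "?r \<noteq> Orderings.top" using nt rD by blast
            have pD': "p \<in> ?D" using pD False by simp
            have "res q ?r d = res q ?r (u q) \<otimes>\<^bsub>U ?r\<^esub> res q ?r (inv\<^bsub>U q\<^esub> (res Orderings.top q x))"
              unfolding d_def using hom_mult[OF reshom[OF rq] uc[OF qnt] group.inv_closed[OF G rxq]] .
            also have "\<dots> = u ?r \<otimes>\<^bsub>U ?r\<^esub> inv\<^bsub>U ?r\<^esub> (u ?r)"
            proof -
              have "res q ?r (u q) = u ?r" using ures[OF qnt rnt rq] .
              moreover have "res q ?r (inv\<^bsub>U q\<^esub> (res Orderings.top q x)) = inv\<^bsub>U ?r\<^esub> (res q ?r (res Orderings.top q x))"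
                using group_hom.hom_inv[OF group_hom.intro[OF G G group_hom_axioms.intro[OF reshom[OF rq]]] rxq] .
              moreover have "res q ?r (res Orderings.top q x) = u ?r"
                using rescomp[OF rq top_greatest xc] xD rD by simp
              ultimately show ?thesis by simp
            qed
            also have "\<dots> = \<one>\<^bsub>U ?r\<^esub>" using G uc[OF rnt] by (simp add: group.r_inv)
            finally have "res q ?r d = \<one>\<^bsub>U ?r\<^esub>" .
            then have "res Orderings.top p (lam q Orderings.top d) = \<one>\<^bsub>U p\<^esub>"
              using lamtop[OF dc0, of p] hom_one[OF lamhom[OF inf.cobounded1] G G] by simp
            then have "res Orderings.top p x' = u p \<otimes>\<^bsub>U p\<^esub> \<one>\<^bsub>U p\<^esub>" using rx' xD pD' by simp
            moreover have "p \<noteq> Orderings.top" using nt pD by blast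
            ultimately show ?thesis using monoid.r_one[OF group.is_monoid[OF G] uc] by simp
          qed
        qed
        then show ?thesis using x'c by blast
      qed
    qed
  qed
qed

theorem lemma9p2:
  fixes U :: "'p::{finite, semilattice_inf, order_top} \<Rightarrow> ('a,'b) monoid_scheme"
    and res :: "'p \<Rightarrow> 'p \<Rightarrow> 'a \<Rightarrow> 'a"
    and lam :: "'p \<Rightarrow> 'p \<Rightarrow> 'a \<Rightarrow> 'a"
  assumes "ab_presheaf U res"
    and "is_extender U res lam"
    and "lim_family U res u"
  shows "\<exists>x\<in>carrier (U Orderings.top). \<forall>p. p \<noteq> Orderings.top \<longrightarrow> res Orderings.top p x = u p"
proof -
  have h1: "\<forall>p\<in>UNIV - {Orderings.top::'p}. p \<noteq> Orderings.top" by blast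
  have h2: "\<forall>p\<in>UNIV - {Orderings.top::'p}. \<forall>r. r \<le> p \<longrightarrow> r \<in> UNIV - {Orderings.top}"
  proof (intro ballI allI impI)
    fix p r :: 'p assume pU: "p \<in> UNIV - {Orderings.top}" and rp: "r \<le> p"
    have "r \<noteq> Orderings.top"
    proof
      assume "r = Orderings.top"
      then have "Orderings.top \<le> p" using rp by simp
      then have "p = Orderings.top" by (rule top.extremum_uniqueI)
      then show False using pU by simp
    qed
    then show "r \<in> UNIV - {Orderings.top}" by simp
  qed
  have "\<exists>x\<in>carrier (U Orderings.top). \<forall>p\<in>(UNIV - {Orderings.top}). res Orderings.top p x = u p"
    using step_lemma[OF assms, of "UNIV - {Orderings.top}", THEN mp, OF h1, THEN mp, OF h2] .
  then show ?thesis by blast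
qed

end
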